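(* Let $V$ be of O'Connell–Yor type. Then $\psi_2^V(\theta)\le0$ for all $\theta>0$.
   Context: A function $V$ is of O'Connell–Yor type if $V\ge0$ is smooth and convex and there are constants $c,C,c_0>0$ such that $V(x)\ge c|x|^2$ for $x\le -C$, $V'(x)\le 0$ for all $x$, and $c_0V''(x)\le -V'''(x)\le c_0^{-1}V''(x)+C\,\mathbf{1}_{\{x\ge -C\}}$ for all $x$. With $Z(\theta)=\int_{\mathbb{R}}\mathrm{e}^{-\theta x-V(x)}\mathrm{d}x$, $\psi^V_2(\theta)=\frac{\mathrm{d}^{3}}{\mathrm{d}\theta^{3}}\log Z(\theta)$. *)

theory Defs
  imports "HOL-Analysis.Analysis"
begin

definition smooth_real :: "(real \<Rightarrow> real) \<Rightarrow> bool" where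
  "smooth_real f \<longleftrightarrow> (\<exists>D :: nat \<Rightarrow> real \<Rightarrow> real. D 0 = f \<and>
      (\<forall>n x. (D n has_real_derivative D (Suc n) x) (at x)))"

definition nderiv :: "nat \<Rightarrow> (real \<Rightarrow> real) \<Rightarrow> real \<Rightarrow> real" where
  "nderiv n f = (deriv ^^ n) f"

definition OConnell_Yor_type :: "(real \<Rightarrow> real) \<Rightarrow> bool" where
  "OConnell_Yor_type V \<longleftrightarrow>
     (\<forall>x. V x \<ge> 0) \<and> smooth_real V \<and> convex_on UNIV V \<and>
     (\<exists>c C c0 :: real. c > 0 \<and> C > 0 \<and> c0 > 0 \<and>
        (\<forall>x. x \<le> - C \<longrightarrow> V x \<ge> c * x\<^sup>2) \<and>
        (\<forall>x. nderiv 1 V x \<le> 0) \<and>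
        (\<forall>x. c0 * nderiv 2 V x \<le> - nderiv 3 V x \<and>
             - nderiv 3 V x \<le> nderiv 2 V x / c0 + C * (if x \<ge> - C then 1 else 0)))"

definition Zpart :: "(real \<Rightarrow> real) \<Rightarrow> real \<Rightarrow> real" where
  "Zpart V \<theta> = (\<integral>x. exp (- \<theta> * x - V x) \<partial>lborel)"

definition psi2 :: "(real \<Rightarrow> real) \<Rightarrow> real \<Rightarrow> real" where
  "psi2 V \<theta> = nderiv 3 (\<lambda>t. ln (Zpart V t)) \<theta>"

end

theory Submission
  imports Defs "HOL-Probability.Sinc_Integral"
begin


lemma mono_top:
  fixes F F' :: "real \<Rightarrow> real"
  assumes "\<And>t. t \<ge> y \<Longrightarrow> DERIV F t :> F' t" "\<And>t. t \<ge> y \<Longrightarrow> F' t \<ge> 0"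
    and "(F \<longlongrightarrow> L) at_top"
  shows "F y \<le> L"
proof -
  have "eventually (\<lambda>t. F y \<le> F t) at_top"
    using eventually_ge_at_top[of y]
  proof eventually_elim
    case (elim t)
    show ?case
      by (rule DERIV_nonneg_imp_nondecreasing[OF elim]) (use assms in auto)
  qed
  then show ?thesis using assms(3) by (intro tendsto_lowerbound) auto
qed

lemma mono_bot:
  fixes F F' :: "real \<Rightarrow> real"
  assumes "\<And>t. t \<le> y \<Longrightarrow> DERIV F t :> F' t" "\<And>t. t \<le> y \<Longrightarrow> F' t \<ge> 0"
    and "(F \<longlongrightarrow> L) at_bot"
  shows "L \<le> F y"
proof -
  have "eventually (\<lambda>t. F t \<le> F y) at_bot"
    using eventually_le_at_bot[of y]
  proof eventually_elim
    case (elim t)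
    show ?case
      by (rule DERIV_nonneg_imp_nondecreasing[OF elim]) (use assms in auto)
  qed
  then show ?thesis using assms(3) by (intro tendsto_upperbound) auto
qed

lemma pow_le_fact_exp:
  fixes y :: real
  shows "y \<ge> 0 \<Longrightarrow> y ^ j \<le> fact j * exp y"
proof (induction j arbitrary: y)
  case 0
  then show ?case by simp
next
  case (Suc j)
  define h where "h t = fact (Suc j) * exp t - t ^ Suc j" for t :: real
  have "h 0 \<le> h y"
  proof (rule DERIV_nonneg_imp_nondecreasing[OF Suc.prems])
    fix t :: real assume t: "0 \<le> t" "t \<le> y"
    have "DERIV h t :> fact (Suc j) * exp t - real (Suc j) * t ^ j"
    proof -
      have p: "DERIV (\<lambda>t. t ^ Suc j) t :> real (Suc j) * t ^ j"
        using DERIV_pow[of "Suc j" t] by simp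
      show ?thesis unfolding h_def
        by (intro derivative_intros p DERIV_cmult DERIV_exp)
    qed
    moreover have "t ^ j \<le> fact j * exp t"
      using Suc.IH t by simp
    moreover have "real (Suc j) * t ^ j \<le> real (Suc j) * (fact j * exp t)"
      by (rule mult_left_mono) (use \<open>t ^ j \<le> fact j * exp t\<close> in auto)
    moreover have "fact (Suc j) * exp t = real (Suc j) * (fact j * exp t)"
      by simp
    ultimately show "\<exists>d. DERIV h t :> d \<and> d \<ge> 0"
      by (intro exI[of _ "fact (Suc j) * exp t - real (Suc j) * t ^ j"]) auto
  qed
  moreover have "0 \<le> (fact (Suc j) :: real)" by simp
  moreover have "h 0 = fact (Suc j)" by (simp add: h_def)
  ultimately show ?case unfolding h_def by linarith
qed

lemma abs_pow_le_exp:
  fixes x e :: real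
  assumes "e > 0"
  shows "\<bar>x\<bar> ^ j \<le> fact j / e ^ j * exp (e * \<bar>x\<bar>)"
proof -
  have "(e * \<bar>x\<bar>) ^ j \<le> fact j * exp (e * \<bar>x\<bar>)"
    using pow_le_fact_exp[of "e * \<bar>x\<bar>" j] assms by simp
  then have "e ^ j * \<bar>x\<bar> ^ j \<le> fact j * exp (e * \<bar>x\<bar>)"
    by (simp add: power_mult_distrib)
  then show ?thesis using assms by (simp add: field_simps)
qed

lemma abs_exp_sub_one:
  fixes a :: real
  shows "\<bar>exp a - 1\<bar> \<le> \<bar>a\<bar> * exp \<bar>a\<bar>"
proof (cases "a \<ge> 0")
  case True
  have "exp (-a) \<ge> 1 - a" using exp_ge_add_one_self[of "-a"] by simp
  then have "exp (-a) * exp a \<ge> (1 - a) * exp a" by (intro mult_right_mono) auto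
  then have "1 \<ge> (1 - a) * exp a" by (simp add: exp_minus field_simps)
  moreover have "exp a \<ge> 1" using True by simp
  ultimately show ?thesis using True by (simp add: algebra_simps)
next
  case False
  have "exp a \<ge> 1 + a" using exp_ge_add_one_self[of a] by simp
  moreover have "exp a \<le> 1" using False by simp
  moreover have "exp \<bar>a\<bar> \<ge> 1" by simp
  moreover have "\<bar>a\<bar> \<le> \<bar>a\<bar> * exp \<bar>a\<bar>"
    using \<open>exp \<bar>a\<bar> \<ge> 1\<close> by (simp add: mult_le_cancel_left1)
  moreover have e1: "\<bar>exp a - 1\<bar> = 1 - exp a" using \<open>exp a \<le> 1\<close> by simp
  moreover have e2: "\<bar>a\<bar> = -a" using False by simp
  ultimately show ?thesis by linarith
qed

lemma integrable_inv_sq: "integrable lborel (\<lambda>x::real. inverse (1 + x^2))"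
  using integrable_inverse_1_plus_square by (simp add: set_integrable_def)

lemma prim:
  fixes h :: "real \<Rightarrow> real"
  assumes cont: "continuous_on UNIV h" and int: "integrable lborel h"
  shows "\<exists>F. (\<forall>x. DERIV F x :> h x) \<and> (F \<longlongrightarrow> 0) at_bot \<and> (F \<longlongrightarrow> integral\<^sup>L lborel h) at_top"
proof -
  have hm[measurable]: "h \<in> borel_measurable borel"
    using cont by (simp add: borel_measurable_continuous_onI) 
  define F where "F y = (\<integral>x. indicator {..y} x * h x \<partial>lborel)" for y
  have top: "(F \<longlongrightarrow> integral\<^sup>L lborel h) at_top"
    using tendsto_integral_at_top[of lborel h] int unfolding F_def[abs_def] by simp
  have bot: "(F \<longlongrightarrow> 0) at_bot"
  proof (rule tendsto_at_botI_sequentially)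
    fix X :: "nat \<Rightarrow> real" assume X: "filterlim X at_bot sequentially"
    have "(\<lambda>n. \<integral>x. indicator {..X n} x * h x \<partial>lborel) \<longlonglongrightarrow> integral\<^sup>L (lborel::real measure) (\<lambda>x. 0)"
    proof (rule integral_dominated_convergence[of "\<lambda>x. 0" lborel "\<lambda>n x. indicator {..X n} x * h x" "\<lambda>x. norm (h x)"])
      show "integrable lborel (\<lambda>x. norm (h x))" using int by auto
      show "AE x in lborel. (\<lambda>n. indicator {..X n} x * h x) \<longlonglongrightarrow> 0"
      proof (rule AE_I2)
        fix x
        from X have "eventually (\<lambda>n. X n < x) sequentially"
          by (simp add: filterlim_at_bot_dense)
        then have "eventually (\<lambda>n. indicator {..X n} x * h x = (0::real)) sequentially"
          by eventually_elim (auto simp: indicator_def)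
        then show "(\<lambda>n. indicator {..X n} x * h x) \<longlonglongrightarrow> 0"
          by (rule tendsto_eventually)
      qed
      show "\<And>n. AE x in lborel. norm (indicator {..X n} x * h x) \<le> norm (h x)"
        by (auto simp: indicator_def)
    qed auto
    then show "(\<lambda>n. F (X n)) \<longlonglongrightarrow> 0" by (simp add: F_def)
  qed
  have diff: "F y - F x = (LBINT t=x..y. h t)" if "x \<le> y" for x y
  proof -
    have "F y - F x = (\<integral>t. indicator {..y} t * h t - indicator {..x} t * h t \<partial>lborel)"
    proof -
      have "integrable lborel (\<lambda>t. indicator {..z} t * h t)" for z
        using integrable_mult_indicator[of "{..z}" lborel h] int by simp
      then show ?thesis unfolding F_def by (simp add: Bochner_Integration.integral_diff)
    qed
    also have "\<dots> = (\<integral>t. indicator {x<..y} t *\<^sub>R h t \<partial>lborel)"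
      by (rule Bochner_Integration.integral_cong) (use that in \<open>auto simp: indicator_def\<close>)
    also have "\<dots> = (LBINT t=x..y. h t)"
      using that by (simp add: interval_integral_Ioc set_lebesgue_integral_def)
    finally show ?thesis .
  qed
  obtain G where G: "\<And>x. (G has_vector_derivative h x) (at x)"
    using einterval_antiderivative[of "-\<infinity>" "\<infinity>" h] cont
    by (auto simp: continuous_on_eq_continuous_at)
  have GD: "DERIV G x :> h x" for x
    using G has_real_derivative_iff_has_vector_derivative by blast
  have FG: "(LBINT t=x..y. h t) = G y - G x" if "x \<le> y" for x y
  proof (rule interval_integral_FTC_finite)
    show "continuous_on {min x y..max x y} h" using cont by (rule continuous_on_subset) auto
    show "(G has_vector_derivative h t) (at t within {min x y..max x y})" for t
      using G by (rule has_vector_derivative_at_within)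
  qed
  have FG2: "F y = G y + (F 0 - G 0)" for y
  proof (cases "0 \<le> y")
    case True
    then show ?thesis using diff[OF True] FG[OF True] by simp
  next
    case False
    then have "y \<le> 0" by simp
    then show ?thesis using diff[OF \<open>y \<le> 0\<close>] FG[OF \<open>y \<le> 0\<close>] by simp
  qed
  have "DERIV F x :> h x" for x
  proof -
    have "DERIV (\<lambda>y. G y + (F 0 - G 0)) x :> h x + 0"
      by (intro derivative_intros GD)
    moreover have "F = (\<lambda>y. G y + (F 0 - G 0))"
      using FG2 by (rule ext)
    ultimately show ?thesis by simp
  qed
  with top bot show ?thesis by blast
qed



locale OY =
  fixes V :: "real \<Rightarrow> real" and D :: "nat \<Rightarrow> real \<Rightarrow> real" and c C :: real
  assumes D0: "D 0 = V"
    and DD: "\<And>n x. DERIV (D n) x :> D (Suc n) x"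
    and Vnn: "\<And>x. V x \<ge> 0"
    and V1: "\<And>x. D 1 x \<le> 0"
    and V2: "\<And>x. D 2 x \<ge> 0"
    and V3: "\<And>x. D 3 x \<le> 0"
    and Vq: "\<And>x. x \<le> -C \<Longrightarrow> V x \<ge> c * x^2"
    and cpos: "c > 0" and Cpos: "C > 0"
begin

definition E :: "real \<Rightarrow> real \<Rightarrow> real" where
  "E t x = exp (- t * x - V x)"

definition M :: "nat \<Rightarrow> real \<Rightarrow> real" where
  "M k t = (\<integral>x. x ^ k * E t x \<partial>lborel)"

lemma DV: "DERIV V x :> D 1 x"
  using DD[of 0 x] D0 by simp

lemma contD: "continuous_on UNIV (D n)"
  using DD by (meson DERIV_isCont continuous_at_imp_continuous_on)

lemma contV: "continuous_on UNIV V"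
  using contD[of 0] D0 by simp

lemma V_meas[measurable]: "V \<in> borel_measurable borel"
  using contV by (rule borel_measurable_continuous_onI)

lemma D_meas[measurable]: "D n \<in> borel_measurable borel"
  using contD by (rule borel_measurable_continuous_onI)

lemma E_pos: "E t x > 0"
  by (simp add: E_def)

lemma E_cont: "continuous_on UNIV (E t)"
  unfolding E_def using contV by (intro continuous_intros) auto

lemma E_meas[measurable]: "(\<lambda>x. E t x) \<in> borel_measurable borel"
  unfolding E_def by measurable

lemma Ebound:
  assumes t: "t > 0"
  shows "\<exists>K. \<forall>x. exp (t * \<bar>x\<bar>) * E t x \<le> K"
proof -
  define K where "K = exp (t^2 / c + 2 * t * C)"
  have "exp (t * \<bar>x\<bar>) * E t x \<le> K" for x
  proof -
    have eq: "exp (t * \<bar>x\<bar>) * E t x = exp (t * \<bar>x\<bar> - t * x - V x)"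
      by (simp add: E_def exp_add[symmetric])
    have "t * \<bar>x\<bar> - t * x - V x \<le> t^2 / c + 2 * t * C"
    proof (cases "x \<ge> 0")
      case True
      have "t^2 / c \<ge> 0" "2 * t * C \<ge> 0" using t cpos Cpos by auto
      moreover have "t * \<bar>x\<bar> = t * x" using True by simp
      ultimately show ?thesis using Vnn[of x] by linarith
    next
      case False
      then have ax: "\<bar>x\<bar> = -x" by simp
      show ?thesis
      proof (cases "x \<le> -C")
        case True
        have "V x \<ge> c * x^2" using Vq[OF True] .
        moreover have "2 * t * (-x) - c * x^2 \<le> t^2 / c"
        proof -
          have "0 \<le> (c * (-x) - t)^2 / c" using cpos by simp
          also have "(c * (-x) - t)^2 / c = c * x^2 - 2 * t * (-x) + t^2 / c"
            using cpos by (simp add: power2_eq_square field_simps)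
          finally show ?thesis by simp
        qed
        moreover have "t * \<bar>x\<bar> - t * x - V x = 2 * t * (-x) - V x" using ax by simp
        moreover have "2 * t * C \<ge> 0" using t Cpos by simp
        ultimately show ?thesis by linarith
      next
        case False
        then have "-x \<le> C" by simp
        then have "2 * t * (-x) \<le> 2 * t * C" using t by (intro mult_left_mono) auto
        moreover have "t^2 / c \<ge> 0" using cpos by simp
        moreover have "t * \<bar>x\<bar> - t * x - V x = 2 * t * (-x) - V x" using ax by simp
        ultimately show ?thesis using Vnn[of x] by linarith
      qed
    qed
    then show ?thesis unfolding eq K_def by simp
  qed
  then show ?thesis by blast
qed

lemma int_dom:
  assumes t: "t > 0"
  shows "integrable lborel (\<lambda>x. \<bar>x\<bar> ^ j * exp ((t/4) * \<bar>x\<bar>) * E t x)"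
proof -
  obtain K where K: "\<And>x. exp (t * \<bar>x\<bar>) * E t x \<le> K" using Ebound[OF t] by blast
  define fj where "fj = fact j / (t/4) ^ j + fact (j+2) / (t/4) ^ (j+2)"
  have fj0: "fj \<ge> 0" unfolding fj_def using t by simp
  have bnd: "\<bar>x\<bar> ^ j * exp ((t/4) * \<bar>x\<bar>) * E t x \<le> (fj * K) * inverse (1 + x^2)" for x
  proof -
    have a1: "\<bar>x\<bar> ^ j \<le> fact j / (t/4) ^ j * exp ((t/4) * \<bar>x\<bar>)"
      using abs_pow_le_exp[of "t/4" x j] t by simp
    have a2: "\<bar>x\<bar> ^ (j+2) \<le> fact (j+2) / (t/4) ^ (j+2) * exp ((t/4) * \<bar>x\<bar>)"
      using abs_pow_le_exp[of "t/4" x "j+2"] t by simp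
    have "\<bar>x\<bar> ^ (j+2) = \<bar>x\<bar> ^ j * x^2"
      by (simp only: power_add power2_abs)
    then have "(1 + x^2) * \<bar>x\<bar> ^ j = \<bar>x\<bar> ^ j + \<bar>x\<bar> ^ (j+2)"
      by (simp add: algebra_simps power2_eq_square)
    also have "\<dots> \<le> fj * exp ((t/4) * \<bar>x\<bar>)"
      using a1 a2 unfolding fj_def by (simp add: algebra_simps)
    finally have b1: "(1 + x^2) * \<bar>x\<bar> ^ j \<le> fj * exp ((t/4) * \<bar>x\<bar>)" .
    have "(1 + x^2) * (\<bar>x\<bar> ^ j * exp ((t/4) * \<bar>x\<bar>) * E t x)
          = ((1 + x^2) * \<bar>x\<bar> ^ j) * (exp ((t/4) * \<bar>x\<bar>) * E t x)" by simp
    also have "\<dots> \<le> (fj * exp ((t/4) * \<bar>x\<bar>)) * (exp ((t/4) * \<bar>x\<bar>) * E t x)"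
      by (rule mult_right_mono[OF b1]) (simp add: E_pos less_imp_le)
    also have "\<dots> = fj * (exp ((t/2) * \<bar>x\<bar>) * E t x)"
      by (simp add: exp_add[symmetric] algebra_simps)
    also have "\<dots> \<le> fj * (exp (t * \<bar>x\<bar>) * E t x)"
      by (rule mult_left_mono[OF _ fj0], rule mult_right_mono) (use t E_pos[of t x] in auto)
    also have "\<dots> \<le> fj * K"
      by (rule mult_left_mono[OF K fj0])
    finally have "(1 + x^2) * (\<bar>x\<bar> ^ j * exp ((t/4) * \<bar>x\<bar>) * E t x) \<le> fj * K" .
    moreover have "1 + x^2 > 0" by (simp add: add_pos_nonneg)
    ultimately show ?thesis by (simp add: field_simps)
  qed
  show ?thesis
  proof (rule Bochner_Integration.integrable_bound)
    show "integrable lborel (\<lambda>x. (fj * K) * inverse (1 + x^2))"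
      using integrable_inv_sq by simp
    show "(\<lambda>x. \<bar>x\<bar> ^ j * exp (t / 4 * \<bar>x\<bar>) * E t x) \<in> borel_measurable lborel"
      by measurable
    show "AE x in lborel. norm (\<bar>x\<bar> ^ j * exp (t / 4 * \<bar>x\<bar>) * E t x) \<le> norm ((fj * K) * inverse (1 + x^2))"
    proof (rule AE_I2)
      fix x
      have "0 \<le> \<bar>x\<bar> ^ j * exp (t / 4 * \<bar>x\<bar>) * E t x" using E_pos[of t x] by simp
      then show "norm (\<bar>x\<bar> ^ j * exp (t / 4 * \<bar>x\<bar>) * E t x) \<le> norm ((fj * K) * inverse (1 + x^2))"
        using bnd[of x] by simp
    qed
  qed
qed

lemma int_pow:
  assumes t: "t > 0"
  shows "integrable lborel (\<lambda>x. x ^ j * E t x)"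
proof (rule Bochner_Integration.integrable_bound[OF int_dom[OF t, of j]])
  show "(\<lambda>x. x ^ j * E t x) \<in> borel_measurable lborel" by measurable
  show "AE x in lborel. norm (x ^ j * E t x) \<le> norm (\<bar>x\<bar> ^ j * exp (t / 4 * \<bar>x\<bar>) * E t x)"
  proof (rule AE_I2)
    fix x
    have "1 \<le> exp (t / 4 * \<bar>x\<bar>)" using t by simp
    then have "(\<bar>x\<bar> ^ j * E t x) * 1 \<le> (\<bar>x\<bar> ^ j * E t x) * exp (t / 4 * \<bar>x\<bar>)"
      by (intro mult_left_mono) (simp_all add: E_pos less_imp_le)
    then have "\<bar>x\<bar> ^ j * E t x \<le> \<bar>x\<bar> ^ j * exp (t / 4 * \<bar>x\<bar>) * E t x"
      by (simp add: ac_simps)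
    then show "norm (x ^ j * E t x) \<le> norm (\<bar>x\<bar> ^ j * exp (t / 4 * \<bar>x\<bar>) * E t x)"
      using E_pos[of t x] by (simp add: abs_mult power_abs)
  qed
qed

lemma E_shift: "E (t + y) x = E t x * exp (- y * x)"
  unfolding E_def by (simp add: exp_add[symmetric] algebra_simps)

lemma E_deriv_t: "DERIV (\<lambda>s. E s x) t :> - x * E t x"
  unfolding E_def by (auto intro!: derivative_eq_intros)

lemma quot_bound:
  assumes t: "t > 0" and y: "y \<noteq> 0" "\<bar>y\<bar> \<le> t/4"
  shows "\<bar>x ^ k * ((E (t + y) x - E t x) / y)\<bar> \<le> \<bar>x\<bar> ^ Suc k * exp ((t/4) * \<bar>x\<bar>) * E t x"
proof -
  have eq: "(E (t + y) x - E t x) / y = E t x * ((exp (- y * x) - 1) / y)"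
    by (simp add: E_shift algebra_simps diff_divide_distrib)
  have rb: "\<bar>(exp (- y * x) - 1) / y\<bar> \<le> \<bar>x\<bar> * exp ((t/4) * \<bar>x\<bar>)"
  proof -
    have "\<bar>exp (- y * x) - 1\<bar> \<le> \<bar>- y * x\<bar> * exp \<bar>- y * x\<bar>"
      by (rule abs_exp_sub_one)
    also have "\<dots> \<le> \<bar>y\<bar> * \<bar>x\<bar> * exp ((t/4) * \<bar>x\<bar>)"
    proof -
      have "\<bar>- y * x\<bar> = \<bar>y\<bar> * \<bar>x\<bar>" by (simp add: abs_mult)
      moreover have "\<bar>y\<bar> * \<bar>x\<bar> \<le> (t/4) * \<bar>x\<bar>" using y by (intro mult_right_mono) auto
      ultimately show ?thesis by (simp add: mult_left_mono)
    qed
    finally have "\<bar>exp (- y * x) - 1\<bar> \<le> \<bar>y\<bar> * (\<bar>x\<bar> * exp ((t/4) * \<bar>x\<bar>))" by simp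
    then show ?thesis using y by (simp add: abs_divide field_simps)
  qed
  have "\<bar>(E (t + y) x - E t x) / y\<bar> = E t x * \<bar>(exp (- y * x) - 1) / y\<bar>"
    unfolding eq using E_pos[of t x] by (simp add: abs_mult)
  also have "\<dots> \<le> E t x * (\<bar>x\<bar> * exp ((t/4) * \<bar>x\<bar>))"
    by (rule mult_left_mono[OF rb]) (use E_pos[of t x] in simp)
  finally have "\<bar>(E (t + y) x - E t x) / y\<bar> \<le> E t x * (\<bar>x\<bar> * exp ((t/4) * \<bar>x\<bar>))" .
  then have "\<bar>x\<bar> ^ k * \<bar>(E (t + y) x - E t x) / y\<bar> \<le> \<bar>x\<bar> ^ k * (E t x * (\<bar>x\<bar> * exp ((t/4) * \<bar>x\<bar>)))"
    by (rule mult_left_mono) simp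
  moreover have "\<bar>x ^ k * ((E (t + y) x - E t x) / y)\<bar> = \<bar>x\<bar> ^ k * \<bar>(E (t + y) x - E t x) / y\<bar>"
    by (simp only: abs_mult power_abs)
  moreover have "\<bar>x\<bar> ^ k * (E t x * (\<bar>x\<bar> * exp ((t/4) * \<bar>x\<bar>))) = \<bar>x\<bar> ^ Suc k * exp ((t/4) * \<bar>x\<bar>) * E t x"
    by (simp add: ac_simps)
  ultimately show ?thesis by linarith
qed

lemma DM:
  assumes t: "t > 0"
  shows "DERIV (M k) t :> - M (Suc k) t"
proof -
  define q where "q h = (M k (t + h) - M k t) / h" for h
  have "(q \<longlongrightarrow> - M (Suc k) t) (at 0)"
  proof (subst tendsto_at_iff_sequentially, intro allI impI)
    fix X :: "nat \<Rightarrow> real"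
    assume X0: "\<forall>i. X i \<in> UNIV - {0}" and X: "X \<longlonglongrightarrow> 0"
    obtain N where N: "\<And>n. n \<ge> N \<Longrightarrow> \<bar>X n\<bar> < t/4"
      using LIMSEQ_D[OF X, of "t/4"] t by auto
    define Y where "Y n = X (n + N)" for n
    have Y0: "Y n \<noteq> 0" for n using X0 by (auto simp: Y_def)
    have Yb: "\<bar>Y n\<bar> \<le> t/4" for n using N[of "n + N"] by (simp add: Y_def)
    have Ylim: "Y \<longlonglongrightarrow> 0" unfolding Y_def by (rule LIMSEQ_ignore_initial_segment[OF X])
    have Yat: "filterlim Y (at 0) sequentially"
      by (rule filterlim_atI[OF Ylim]) (simp add: Y0)
    have tY: "t + Y n > 0" for n using Yb[of n] t by linarith
    have qY: "q (Y n) = (\<integral>x. x ^ k * ((E (t + Y n) x - E t x) / Y n) \<partial>lborel)" for n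
    proof -
      have "q (Y n) = ((\<integral>x. x ^ k * E (t + Y n) x \<partial>lborel) - (\<integral>x. x ^ k * E t x \<partial>lborel)) / Y n"
        by (simp add: q_def M_def)
      also have "\<dots> = (\<integral>x. x ^ k * E (t + Y n) x - x ^ k * E t x \<partial>lborel) / Y n"
        using int_pow[OF tY[of n], of k] int_pow[OF t, of k]
        by (simp add: Bochner_Integration.integral_diff)
      also have "\<dots> = (\<integral>x. (x ^ k * E (t + Y n) x - x ^ k * E t x) / Y n \<partial>lborel)"
        by simp
      also have "\<dots> = (\<integral>x. x ^ k * ((E (t + Y n) x - E t x) / Y n) \<partial>lborel)"
        by (simp add: algebra_simps diff_divide_distrib)
      finally show ?thesis .
    qed
    have "(\<lambda>n. \<integral>x. x ^ k * ((E (t + Y n) x - E t x) / Y n) \<partial>lborel) \<longlonglongrightarrow>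
          integral\<^sup>L lborel (\<lambda>x. x ^ k * (- x * E t x))"
    proof (rule integral_dominated_convergence[of "\<lambda>x. x ^ k * (- x * E t x)" lborel
          "\<lambda>n x. x ^ k * ((E (t + Y n) x - E t x) / Y n)" "\<lambda>x. \<bar>x\<bar> ^ Suc k * exp ((t/4) * \<bar>x\<bar>) * E t x"])
      show "(\<lambda>x. x ^ k * (- x * E t x)) \<in> borel_measurable lborel" by measurable
      show "\<And>n. (\<lambda>x. x ^ k * ((E (t + Y n) x - E t x) / Y n)) \<in> borel_measurable lborel" by measurable
      show "integrable lborel (\<lambda>x. \<bar>x\<bar> ^ Suc k * exp ((t/4) * \<bar>x\<bar>) * E t x)"
        by (rule int_dom[OF t])
      show "AE x in lborel. (\<lambda>n. x ^ k * ((E (t + Y n) x - E t x) / Y n)) \<longlonglongrightarrow> x ^ k * (- x * E t x)"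
      proof (rule AE_I2)
        fix x
        have "((\<lambda>h. (E (t + h) x - E t x) / h) \<longlongrightarrow> - x * E t x) (at 0)"
          using E_deriv_t[of x t] by (simp add: DERIV_def)
        then have "(\<lambda>n. (E (t + Y n) x - E t x) / Y n) \<longlonglongrightarrow> - x * E t x"
          by (rule filterlim_compose[OF _ Yat])
        then show "(\<lambda>n. x ^ k * ((E (t + Y n) x - E t x) / Y n)) \<longlonglongrightarrow> x ^ k * (- x * E t x)"
          by (intro tendsto_intros)
      qed
      show "\<And>n. AE x in lborel. norm (x ^ k * ((E (t + Y n) x - E t x) / Y n)) \<le> \<bar>x\<bar> ^ Suc k * exp ((t/4) * \<bar>x\<bar>) * E t x"
        using quot_bound[OF t Y0 Yb] by simp
    qed
    moreover have "integral\<^sup>L lborel (\<lambda>x. x ^ k * (- x * E t x)) = - M (Suc k) t"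
      by (simp add: M_def algebra_simps)
    ultimately have "(\<lambda>n. q (Y n)) \<longlonglongrightarrow> - M (Suc k) t" using qY by simp
    then have "(\<lambda>n. q (X (n + N))) \<longlonglongrightarrow> - M (Suc k) t" by (simp add: Y_def)
    then show "(q \<circ> X) \<longlonglongrightarrow> - M (Suc k) t"
      unfolding comp_def by (rule LIMSEQ_offset)
  qed
  then show ?thesis by (simp add: DERIV_def q_def[abs_def])
qed

end


lemma deriv_local:
  fixes f g :: "real \<Rightarrow> real"
  assumes "open S" "x \<in> S" "\<And>y. y \<in> S \<Longrightarrow> g y = f y" "DERIV g x :> d"
  shows "deriv f x = d"
  using has_field_derivative_transform_within_open[OF assms(4,1,2,3)] by (rule DERIV_imp_deriv)

context OY begin

definition L1 :: "real \<Rightarrow> real" where "L1 t = - M 1 t / M 0 t"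
definition L2 :: "real \<Rightarrow> real" where "L2 t = M 2 t / M 0 t - (M 1 t / M 0 t)^2"
definition L3 :: "real \<Rightarrow> real" where
  "L3 t = - M 3 t / M 0 t + 3 * M 1 t * M 2 t / (M 0 t)^2 - 2 * (M 1 t / M 0 t)^3"

end


lemma expabs_top:
  fixes a :: real assumes a: "a > 0"
  shows "((\<lambda>x. exp (- a * \<bar>x\<bar>)) \<longlongrightarrow> 0) at_top"
proof -
  have "((\<lambda>x. exp (- a * x)) \<longlongrightarrow> 0) at_top"
    using a
    by (auto intro!: exp_at_bot[THEN filterlim_compose] filterlim_tendsto_pos_mult_at_top filterlim_ident
             simp: filterlim_uminus_at_bot mult.commute[of _ a])
  moreover have ev: "eventually (\<lambda>x. exp (- a * x) = exp (- a * \<bar>x\<bar>)) at_top"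
    using eventually_ge_at_top[of "0::real"] by eventually_elim simp
  ultimately show ?thesis using tendsto_cong[OF ev] by blast
qed

lemma expabs_bot:
  fixes a :: real assumes a: "a > 0"
  shows "((\<lambda>x. exp (- a * \<bar>x\<bar>)) \<longlongrightarrow> 0) at_bot"
  unfolding filterlim_at_bot_mirror using expabs_top[OF a] by simp

locale OYt = OY +
  fixes t :: real
  assumes tpos: "t > 0"
begin

definition g :: "real \<Rightarrow> real" where "g x = t + D 1 x"

lemma f_deriv: "DERIV (E t) x :> - g x * E t x"
proof -
  have "DERIV (\<lambda>x. exp (- t * x - V x)) x :> exp (- t * x - V x) * (- t - D 1 x)"
    by (auto intro!: derivative_eq_intros DV)
  then show ?thesis by (simp add: E_def[abs_def] g_def algebra_simps)
qed

lemma g_deriv: "DERIV g x :> D 2 x"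
proof -
  have "DERIV (\<lambda>x. t + D 1 x) x :> 0 + D (Suc 1) x"
    by (intro derivative_intros DD)
  then show ?thesis by (simp add: g_def[abs_def] numeral_2_eq_2)
qed

lemma D2_deriv: "DERIV (D 2) x :> D 3 x"
  using DD[of 2 x] by (simp add: numeral_3_eq_3 numeral_2_eq_2)

lemma D2_anti: "a \<le> b \<Longrightarrow> D 2 b \<le> D 2 a"
  by (rule DERIV_nonpos_imp_nonincreasing[of a b "D 2"]) (use D2_deriv V3 in blast)+

lemma g_mono: "a \<le> b \<Longrightarrow> g a \<le> g b"
  by (rule DERIV_nonneg_imp_nondecreasing[of a b g]) (use g_deriv V2 in blast)+

lemma tangent: "g y \<le> g a + D 2 a * (y - a)"
proof -
  define h where "h s = g a + D 2 a * (s - a) - g s" for s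
  have hd: "DERIV h s :> D 2 a - D 2 s" for s
  proof -
    show ?thesis
      unfolding h_def[abs_def] by (auto intro!: derivative_eq_intros g_deriv)
  qed
  have "h a \<le> h y"
  proof (cases "a \<le> y")
    case True
    show ?thesis
    proof (rule DERIV_nonneg_imp_nondecreasing[OF True])
      fix s assume "a \<le> s" "s \<le> y"
      then have "D 2 s \<le> D 2 a" using D2_anti by blast
      then show "\<exists>d. DERIV h s :> d \<and> 0 \<le> d" using hd[of s] by auto
    qed
  next
    case False
    then have "y \<le> a" by simp
    show ?thesis
    proof (rule DERIV_nonpos_imp_nonincreasing[OF \<open>y \<le> a\<close>])
      fix s assume "y \<le> s" "s \<le> a"
      then have "D 2 a \<le> D 2 s" using D2_anti by blast
      then show "\<exists>d. DERIV h s :> d \<and> d \<le> 0" using hd[of s] by auto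
    qed
  qed
  then show ?thesis by (simp add: h_def)
qed

lemma decay_bound:
  "\<exists>B. \<forall>x. \<bar>x\<bar> ^ k * E t x \<le> B * exp (- (t/2) * \<bar>x\<bar>)"
proof -
  obtain K where K: "\<And>x. exp (t * \<bar>x\<bar>) * E t x \<le> K" using Ebound[OF tpos] by blast
  define B where "B = fact k / (t/2) ^ k * K"
  have "\<bar>x\<bar> ^ k * E t x \<le> B * exp (- (t/2) * \<bar>x\<bar>)" for x
  proof -
    have c0: "fact k / (t/2) ^ k \<ge> (0::real)" using tpos by simp
    have "\<bar>x\<bar> ^ k * E t x \<le> (fact k / (t/2) ^ k * exp ((t/2) * \<bar>x\<bar>)) * E t x"
      by (rule mult_right_mono[OF abs_pow_le_exp]) (use tpos E_pos[of t x] in auto)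
    also have "\<dots> = fact k / (t/2) ^ k * (exp (t * \<bar>x\<bar>) * E t x) * exp (- (t/2) * \<bar>x\<bar>)"
      by (simp add: exp_add[symmetric] algebra_simps)
    also have "\<dots> \<le> fact k / (t/2) ^ k * K * exp (- (t/2) * \<bar>x\<bar>)"
      by (intro mult_right_mono mult_left_mono K c0) simp
    finally show ?thesis by (simp add: B_def)
  qed
  then show ?thesis by blast
qed

lemma decay:
  "((\<lambda>x. x ^ k * E t x) \<longlongrightarrow> 0) at_top" "((\<lambda>x. x ^ k * E t x) \<longlongrightarrow> 0) at_bot"
proof -
  obtain B where B: "\<And>x. \<bar>x\<bar> ^ k * E t x \<le> B * exp (- (t/2) * \<bar>x\<bar>)" using decay_bound by blast
  have nb: "norm (x ^ k * E t x) \<le> B * exp (- (t/2) * \<bar>x\<bar>)" for x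
    using B[of x] E_pos[of t x] by (simp add: abs_mult power_abs)
  have h2: "t/2 > 0" using tpos by simp
  have nb2: "norm (x ^ k * E t x) \<le> norm (B * exp (- (t/2) * \<bar>x\<bar>)) * 1" for x
    using nb[of x] by (metis abs_ge_self mult.right_neutral order_trans real_norm_def)
  have ev: "eventually (\<lambda>x. norm (x ^ k * E t x) \<le> norm (B * exp (- (t/2) * \<bar>x\<bar>)) * 1) F" for F
    using nb2 by (intro always_eventually allI) 
  show "((\<lambda>x. x ^ k * E t x) \<longlongrightarrow> 0) at_top"
    by (rule tendsto_0_le[OF tendsto_mult_right_zero[OF expabs_top[OF h2], of B] ev])
  show "((\<lambda>x. x ^ k * E t x) \<longlongrightarrow> 0) at_bot"
    by (rule tendsto_0_le[OF tendsto_mult_right_zero[OF expabs_bot[OF h2], of B] ev])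
qed

definition m :: real where "m = M 1 t / M 0 t"
definition u :: "real \<Rightarrow> real" where "u x = x - m"

lemma u_deriv: "DERIV u x :> 1"
  unfolding u_def[abs_def] by (auto intro!: derivative_eq_intros)

lemma int_E: "integrable lborel (E t)"
  using int_pow[OF tpos, of 0] by simp

lemma M0_eq: "integral\<^sup>L lborel (E t) = M 0 t"
  by (simp add: M_def)

lemma uf_eq: "(\<lambda>x. u x * E t x) = (\<lambda>x. x ^ 1 * E t x - m * (x ^ 0 * E t x))"
  by (auto simp: u_def algebra_simps fun_eq_iff)

lemma int_uf: "integrable lborel (\<lambda>x. u x * E t x)"
  unfolding uf_eq by (intro Bochner_Integration.integrable_diff integrable_mult_right int_pow tpos)

lemma hb: "has_bochner_integral lborel (\<lambda>x. x ^ j * E t x) (M j t)"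
  unfolding M_def by (rule has_bochner_integral_integrable[OF int_pow[OF tpos]])

lemma integral_uf: "integral\<^sup>L lborel (\<lambda>x. u x * E t x) = M 1 t - m * M 0 t"
  unfolding uf_eq
  by (intro has_bochner_integral_integral_eq has_bochner_integral_diff has_bochner_integral_mult_right hb)

lemma u3f_eq: "(\<lambda>x. u x ^ 3 * E t x) = (\<lambda>x. x ^ 3 * E t x - 3 * m * (x ^ 2 * E t x) + 3 * m\<^sup>2 * (x ^ 1 * E t x) - m ^ 3 * (x ^ 0 * E t x))"
  by (auto simp: u_def algebra_simps fun_eq_iff power2_eq_square power3_eq_cube)

lemma int_u3f: "integrable lborel (\<lambda>x. u x ^ 3 * E t x)"
  unfolding u3f_eq
  by (intro Bochner_Integration.integrable_diff Bochner_Integration.integrable_add integrable_mult_right int_pow tpos)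

definition T :: real where "T = M 3 t - 3 * m * M 2 t + 3 * m\<^sup>2 * M 1 t - m ^ 3 * M 0 t"

lemma integral_u3f: "integral\<^sup>L lborel (\<lambda>x. u x ^ 3 * E t x) = T"
  unfolding u3f_eq T_def
  by (intro has_bochner_integral_integral_eq has_bochner_integral_diff has_bochner_integral_add
      has_bochner_integral_mult_right hb)

lemma uf_cont: "continuous_on UNIV (\<lambda>x. u x * E t x)"
  unfolding u_def using E_cont[of t] by (intro continuous_intros) auto

lemma u3f_cont: "continuous_on UNIV (\<lambda>x. u x ^ 3 * E t x)"
  unfolding u_def using E_cont[of t] by (intro continuous_intros) auto

definition F0 :: "real \<Rightarrow> real" where
  "F0 = (SOME F. (\<forall>x. DERIV F x :> E t x) \<and> (F \<longlongrightarrow> 0) at_bot \<and> (F \<longlongrightarrow> M 0 t) at_top)"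
definition P :: "real \<Rightarrow> real" where
  "P = (SOME F. (\<forall>x. DERIV F x :> u x * E t x) \<and> (F \<longlongrightarrow> 0) at_bot \<and> (F \<longlongrightarrow> M 1 t - m * M 0 t) at_top)"
definition A :: "real \<Rightarrow> real" where
  "A = (SOME F. (\<forall>x. DERIV F x :> u x ^ 3 * E t x) \<and> (F \<longlongrightarrow> 0) at_bot \<and> (F \<longlongrightarrow> T) at_top)"

lemma F0: "\<And>x. DERIV F0 x :> E t x" "(F0 \<longlongrightarrow> 0) at_bot" "(F0 \<longlongrightarrow> M 0 t) at_top"
proof -
  have "\<exists>F. (\<forall>x. DERIV F x :> E t x) \<and> (F \<longlongrightarrow> 0) at_bot \<and> (F \<longlongrightarrow> M 0 t) at_top"
    using prim[OF E_cont int_E] M0_eq by simp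
  from someI_ex[OF this] show "\<And>x. DERIV F0 x :> E t x" "(F0 \<longlongrightarrow> 0) at_bot" "(F0 \<longlongrightarrow> M 0 t) at_top"
    unfolding F0_def by blast+
qed

lemma P0: "\<And>x. DERIV P x :> u x * E t x" "(P \<longlongrightarrow> 0) at_bot" "(P \<longlongrightarrow> M 1 t - m * M 0 t) at_top"
proof -
  have "\<exists>F. (\<forall>x. DERIV F x :> u x * E t x) \<and> (F \<longlongrightarrow> 0) at_bot \<and> (F \<longlongrightarrow> M 1 t - m * M 0 t) at_top"
    using prim[OF uf_cont int_uf] integral_uf by simp
  from someI_ex[OF this] show "\<And>x. DERIV P x :> u x * E t x" "(P \<longlongrightarrow> 0) at_bot" "(P \<longlongrightarrow> M 1 t - m * M 0 t) at_top"
    unfolding P_def by blast+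
qed

lemma A0: "\<And>x. DERIV A x :> u x ^ 3 * E t x" "(A \<longlongrightarrow> 0) at_bot" "(A \<longlongrightarrow> T) at_top"
proof -
  have "\<exists>F. (\<forall>x. DERIV F x :> u x ^ 3 * E t x) \<and> (F \<longlongrightarrow> 0) at_bot \<and> (F \<longlongrightarrow> T) at_top"
    using prim[OF u3f_cont int_u3f] integral_u3f by simp
  from someI_ex[OF this] show "\<And>x. DERIV A x :> u x ^ 3 * E t x" "(A \<longlongrightarrow> 0) at_bot" "(A \<longlongrightarrow> T) at_top"
    unfolding A_def by blast+
qed

lemma M0pos_t: "M 0 t > 0"
proof -
  have "0 \<le> F0 0"
    by (rule mono_bot[OF F0(1) _ F0(2)]) (simp add: E_pos less_imp_le)
  moreover have "F0 0 < F0 1"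
    by (rule DERIV_pos_imp_increasing) (use F0(1) E_pos in auto)
  moreover have "F0 1 \<le> M 0 t"
    by (rule mono_top[OF F0(1) _ F0(3)]) (simp add: E_pos less_imp_le)
  ultimately show ?thesis by simp
qed

lemma Pbot: "(P \<longlongrightarrow> 0) at_bot" and Ptop: "(P \<longlongrightarrow> 0) at_top"
  using P0(2,3) M0pos_t by (simp_all add: m_def)

lemma f_top: "(E t \<longlongrightarrow> 0) at_top" and f_bot: "(E t \<longlongrightarrow> 0) at_bot"
  using decay[of 0] by simp_all

lemma uf_top: "((\<lambda>x. u x * E t x) \<longlongrightarrow> 0) at_top" and uf_bot: "((\<lambda>x. u x * E t x) \<longlongrightarrow> 0) at_bot"
proof -
  have eq: "(\<lambda>x. u x * E t x) = (\<lambda>x. x ^ 1 * E t x - m * (x ^ 0 * E t x))" by (rule uf_eq)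
  show "((\<lambda>x. u x * E t x) \<longlongrightarrow> 0) at_top"
    unfolding eq using tendsto_diff[OF decay(1)[of 1] tendsto_mult_right_zero[OF decay(1)[of 0], of m]] by simp
  show "((\<lambda>x. u x * E t x) \<longlongrightarrow> 0) at_bot"
    unfolding eq using tendsto_diff[OF decay(2)[of 1] tendsto_mult_right_zero[OF decay(2)[of 0], of m]] by simp
qed

lemma gm_nonneg: "g m \<ge> 0"
proof -
  define Phi where "Phi y = E t y + g m * F0 y + D 2 m * P y" for y
  have Pd: "DERIV Phi y :> E t y * (g m + D 2 m * (y - m) - g y)" for y
  proof -
    have "DERIV Phi y :> - g y * E t y + g m * E t y + D 2 m * (u y * E t y)"
      unfolding Phi_def[abs_def] by (intro derivative_intros DERIV_cmult f_deriv F0(1) P0(1))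
    then show ?thesis by (simp add: u_def algebra_simps)
  qed
  have Pn: "E t y * (g m + D 2 m * (y - m) - g y) \<ge> 0" for y
    using tangent[of y m] E_pos[of t y] by simp
  have "(Phi \<longlongrightarrow> 0 + g m * 0 + D 2 m * 0) at_bot"
    unfolding Phi_def[abs_def] by (intro tendsto_intros f_bot F0(2) Pbot)
  then have "0 \<le> Phi 0" using mono_bot[OF Pd Pn] by simp
  moreover have "(Phi \<longlongrightarrow> 0 + g m * M 0 t + D 2 m * 0) at_top"
    unfolding Phi_def[abs_def] by (intro tendsto_intros f_top F0(3) Ptop)
  then have "Phi 0 \<le> g m * M 0 t" using mono_top[OF Pd Pn] by simp
  ultimately have "0 \<le> g m * M 0 t" by simp
  then show ?thesis using M0pos_t by (simp add: zero_le_mult_iff)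
qed

lemma u2P_top: "((\<lambda>y. u y ^ 2 * P y) \<longlongrightarrow> 0) at_top"
proof (rule tendsto_sandwich[where f="\<lambda>y. A y - T" and h="\<lambda>y. 0"])
  have ev: "eventually (\<lambda>y. y > m) at_top" by (rule eventually_gt_at_top)
  show "eventually (\<lambda>y. A y - T \<le> u y ^ 2 * P y) at_top"
    using ev
  proof eventually_elim
    case (elim y)
    define G where "G s = A s - u y ^ 2 * P s" for s
    have Gd: "DERIV G s :> u s * E t s * (u s ^ 2 - u y ^ 2)" for s
    proof -
      have "DERIV G s :> u s ^ 3 * E t s - u y ^ 2 * (u s * E t s)"
        unfolding G_def[abs_def] by (intro derivative_intros DERIV_cmult A0(1) P0(1))
      then show ?thesis by (simp add: algebra_simps power2_eq_square power3_eq_cube)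
    qed
    have Gn: "u s * E t s * (u s ^ 2 - u y ^ 2) \<ge> 0" if "s \<ge> y" for s
    proof -
      have "u s \<ge> u y" "u y > 0" using that elim by (auto simp: u_def)
      then have "u s ^ 2 \<ge> u y ^ 2" by (intro power_mono) auto
      then show ?thesis using \<open>u s \<ge> u y\<close> \<open>u y > 0\<close> E_pos[of t s] by simp
    qed
    have "(G \<longlongrightarrow> T - u y ^ 2 * 0) at_top"
      unfolding G_def[abs_def] by (intro tendsto_intros A0(3) Ptop)
    then have "G y \<le> T" using mono_top[OF Gd Gn] by simp
    then show ?case by (simp add: G_def)
  qed
  show "eventually (\<lambda>y. u y ^ 2 * P y \<le> 0) at_top"
    using ev
  proof eventually_elim
    case (elim y)
    have "P y \<le> 0"
    proof (rule mono_top[OF P0(1) _ Ptop])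
      fix s assume "s \<ge> y"
      then show "u s * E t s \<ge> 0" using elim E_pos[of t s] by (simp add: u_def)
    qed
    then show ?case by (simp add: mult_nonneg_nonpos)
  qed
  show "((\<lambda>y. A y - T) \<longlongrightarrow> 0) at_top"
    using tendsto_diff[OF A0(3) tendsto_const[of T]] by simp
qed simp

lemma u2P_bot: "((\<lambda>y. u y ^ 2 * P y) \<longlongrightarrow> 0) at_bot"
proof (rule tendsto_sandwich[where f="\<lambda>y. A y" and h="\<lambda>y. 0"])
  have ev: "eventually (\<lambda>y. y < m) at_bot" by (rule eventually_gt_at_bot)
  show "eventually (\<lambda>y. A y \<le> u y ^ 2 * P y) at_bot"
    using ev
  proof eventually_elim
    case (elim y)
    define G where "G s = u y ^ 2 * P s - A s" for s
    have Gd: "DERIV G s :> u s * E t s * (u y ^ 2 - u s ^ 2)" for s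
    proof -
      have "DERIV G s :> u y ^ 2 * (u s * E t s) - u s ^ 3 * E t s"
        unfolding G_def[abs_def] by (intro derivative_intros DERIV_cmult A0(1) P0(1))
      then show ?thesis by (simp add: algebra_simps power2_eq_square power3_eq_cube)
    qed
    have Gn: "u s * E t s * (u y ^ 2 - u s ^ 2) \<ge> 0" if "s \<le> y" for s
    proof -
      have "- u s \<ge> - u y" "- u y > 0" using that elim by (auto simp: u_def)
      then have "(- u s) ^ 2 \<ge> (- u y) ^ 2" by (intro power_mono) auto
      then have "u y ^ 2 - u s ^ 2 \<le> 0" by simp
      moreover have "u s * E t s \<le> 0" using \<open>- u y > 0\<close> \<open>- u s \<ge> - u y\<close> E_pos[of t s]
        by (simp add: mult_nonpos_nonneg)
      ultimately show ?thesis by (simp add: mult_nonpos_nonpos)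
    qed
    have "(G \<longlongrightarrow> u y ^ 2 * 0 - 0) at_bot"
      unfolding G_def[abs_def] by (intro tendsto_intros A0(2) Pbot)
    then have "0 \<le> G y" using mono_bot[OF Gd Gn] by simp
    then show ?case by (simp add: G_def)
  qed
  show "eventually (\<lambda>y. u y ^ 2 * P y \<le> 0) at_bot"
    using ev
  proof eventually_elim
    case (elim y)
    have "- 0 \<le> - P y"
    proof (rule mono_bot[of y "\<lambda>s. - P s" "\<lambda>s. - (u s * E t s)"])
      show "DERIV (\<lambda>s. - P s) s :> - (u s * E t s)" for s by (intro derivative_intros P0(1))
      show "0 \<le> - (u s * E t s)" if "s \<le> y" for s
        using that elim E_pos[of t s] by (simp add: u_def mult_nonpos_nonneg)
      show "((\<lambda>s. - P s) \<longlongrightarrow> - 0) at_bot" by (intro tendsto_intros Pbot)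
    qed
    then have "P y \<le> 0" by simp
    then show ?case by (simp add: mult_nonneg_nonpos)
  qed
  show "(A \<longlongrightarrow> 0) at_bot" by (rule A0(2))
qed simp

lemma q_nonneg: "g y - u y * D 2 y \<ge> 0"
  using tangent[of m y] gm_nonneg by (simp add: u_def algebra_simps)

definition NK :: "real \<Rightarrow> real" where "NK y = P y + u y * E t y / g y"

lemma NK_deriv:
  assumes "g y \<noteq> 0"
  shows "DERIV NK y :> E t y * (g y - u y * D 2 y) / (g y)^2"
proof -
  have "DERIV NK y :> u y * E t y + ((1 * E t y + (- g y * E t y) * u y) * g y - u y * E t y * D 2 y) / (g y * g y)"
    unfolding NK_def[abs_def]
    by (intro derivative_intros DERIV_divide DERIV_mult u_deriv f_deriv g_deriv P0(1) assms)
  moreover have "u y * E t y + ((1 * E t y + (- g y * E t y) * u y) * g y - u y * E t y * D 2 y) / (g y * g y)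
      = E t y * (g y - u y * D 2 y) / (g y)^2"
    using assms by (simp add: field_simps power2_eq_square)
  ultimately show ?thesis by simp
qed

lemma NK_deriv_nonneg: "E t y * (g y - u y * D 2 y) / (g y)^2 \<ge> 0"
  using q_nonneg[of y] E_pos[of t y] by simp

definition Dd :: "real \<Rightarrow> real" where "Dd x = - P x * g x - u x * E t x"

lemma g_not_le0: "\<not> (\<forall>y. g y \<le> 0)"
proof
  assume H: "\<forall>y. g y \<le> 0"
  define y0 where "y0 = V 0 / t + 1"
  have y0: "y0 \<ge> 0" using Vnn[of 0] tpos by (simp add: y0_def)
  have "V y0 + t * y0 \<le> V 0 + t * 0"
  proof (rule DERIV_nonpos_imp_nonincreasing[OF y0])
    fix s
    have "DERIV (\<lambda>s. V s + t * s) s :> D 1 s + t" by (auto intro!: derivative_eq_intros DV)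
    moreover have "D 1 s + t \<le> 0" using H[rule_format, of s] by (simp add: g_def)
    ultimately show "\<exists>d. DERIV (\<lambda>s. V s + t * s) s :> d \<and> d \<le> 0" by blast
  qed
  then have "V y0 \<le> V 0 - t * y0" by simp
  also have "\<dots> = - t" using tpos by (simp add: y0_def field_simps)
  finally show False using Vnn[of y0] tpos by simp
qed

lemma g_zero_case:
  assumes "g x = 0"
  shows "x \<le> m"
proof (rule ccontr)
  assume "\<not> x \<le> m"
  then have xm: "m < x" by simp
  have gm0: "g m = 0" using g_mono[of m x] xm assms gm_nonneg by simp
  have gz: "g s = 0" if "s \<in> {m<..<x}" for s
    using g_mono[of m s] g_mono[of s x] that gm0 assms by auto
  define c' where "c' = (m + x) / 2"
  have c': "c' \<in> {m<..<x}" using xm by (simp add: c'_def)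
  have "DERIV g c' :> 0"
    by (rule has_field_derivative_transform_within_open[of "\<lambda>_. 0" 0 c' "{m<..<x}"])
       (use c' gz in auto)
  then have "D 2 c' = 0" using g_deriv[of c'] DERIV_unique by blast
  then have "\<forall>y. g y \<le> 0" using tangent[of _ c'] gz[OF c'] by simp
  then show False using g_not_le0 by blast
qed

lemma Dd_nonneg: "Dd x \<ge> 0"
proof (cases "g x" "0::real" rule: linorder_cases)
  case greater
  have gs: "g s > 0" if "s \<ge> x" for s using g_mono[OF that] greater by simp
  have lim: "(NK \<longlongrightarrow> 0 + 0) at_top"
    unfolding NK_def[abs_def]
  proof (intro tendsto_intros Ptop)
    have ev: "eventually (\<lambda>s. norm (u s * E t s / g s) \<le> norm (u s * E t s) * (1 / g x)) at_top"
      using eventually_ge_at_top[of x]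
    proof eventually_elim
      case (elim s)
      have "g x \<le> g s" using g_mono[OF elim] .
      then show ?case using greater
        by (simp add: abs_divide divide_simps mult_left_mono abs_mult)
    qed
    show "((\<lambda>s. u s * E t s / g s) \<longlongrightarrow> 0) at_top"
      by (rule tendsto_0_le[OF uf_top ev])
  qed
  have "NK x \<le> 0"
    using mono_top[of x NK "\<lambda>y. E t y * (g y - u y * D 2 y) / (g y)^2" 0] NK_deriv gs
      NK_deriv_nonneg lim by force
  then have "P x + u x * E t x / g x \<le> 0" by (simp add: NK_def)
  then have "(P x + u x * E t x / g x) * g x \<le> 0" using greater by (simp add: mult_nonpos_nonneg)
  then show ?thesis using greater by (simp add: Dd_def algebra_simps)
next
  case less
  have gs: "g s < 0" if "s \<le> x" for s using g_mono[OF that] less by simp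
  have lim: "(NK \<longlongrightarrow> 0 + 0) at_bot"
    unfolding NK_def[abs_def]
  proof (intro tendsto_intros Pbot)
    have ev: "eventually (\<lambda>s. norm (u s * E t s / g s) \<le> norm (u s * E t s) * (1 / (- g x))) at_bot"
      using eventually_le_at_bot[of x]
    proof eventually_elim
      case (elim s)
      have "g s \<le> g x" using g_mono[OF elim] .
      then show ?case using less
        by (simp add: abs_divide divide_simps mult_left_mono abs_mult)
    qed
    show "((\<lambda>s. u s * E t s / g s) \<longlongrightarrow> 0) at_bot"
      by (rule tendsto_0_le[OF uf_bot ev])
  qed
  have "0 \<le> NK x"
    using mono_bot[of x NK "\<lambda>y. E t y * (g y - u y * D 2 y) / (g y)^2" 0] NK_deriv gs
      NK_deriv_nonneg lim by force
  then have "P x + u x * E t x / g x \<ge> 0" by (simp add: NK_def)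
  then have "(P x + u x * E t x / g x) * g x \<le> 0" using less by (simp add: mult_nonneg_nonpos)
  then show ?thesis using less by (simp add: Dd_def algebra_simps)
next
  case equal
  then have "x \<le> m" by (rule g_zero_case)
  then show ?thesis using equal E_pos[of t x] by (simp add: Dd_def u_def mult_nonpos_nonneg)
qed

definition tau :: "real \<Rightarrow> real" where "tau y = - P y / E t y"

lemma tau_deriv: "DERIV tau y :> Dd y / E t y"
proof -
  have ne: "E t y \<noteq> 0" using E_pos[of t y] by simp
  have "DERIV tau y :> ((- (u y * E t y)) * E t y - (- P y) * (- g y * E t y)) / (E t y * E t y)"
    unfolding tau_def[abs_def] by (intro DERIV_divide derivative_intros P0(1) f_deriv ne)
  moreover have "((- (u y * E t y)) * E t y - (- P y) * (- g y * E t y)) / (E t y * E t y) = Dd y / E t y"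
    using ne by (simp add: Dd_def field_simps)
  ultimately show ?thesis by simp
qed

lemma tau_mono: "a \<le> b \<Longrightarrow> tau a \<le> tau b"
  by (rule DERIV_nonneg_imp_nondecreasing[of a b tau])
     (use tau_deriv Dd_nonneg E_pos in \<open>force intro: divide_nonneg_pos\<close>)+

definition Fn :: "real \<Rightarrow> real" where "Fn y = (A y - u y ^ 2 * P y - 2 * tau m * P y) / 2"

lemma Fn_deriv: "DERIV Fn y :> u y * E t y * (tau y - tau m)"
proof -
  have ne: "E t y \<noteq> 0" using E_pos[of t y] by simp
  have d2: "DERIV (\<lambda>y. u y ^ 2) y :> 2 * u y"
    using DERIV_power[OF u_deriv[of y], where n=2] by (simp add: numeral_2_eq_2)
  show ?thesis
    unfolding Fn_def[abs_def]
    using ne E_pos[of t m] by (auto intro!: derivative_eq_intros A0(1) P0(1) u_deriv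
      simp: tau_def field_simps power2_eq_square power3_eq_cube)
qed

lemma Fn_deriv_nonneg: "u y * E t y * (tau y - tau m) \<ge> 0"
proof (cases "y \<ge> m")
  case True
  then have "tau y \<ge> tau m" by (rule tau_mono)
  then show ?thesis using True E_pos[of t y] by (simp add: u_def)
next
  case False
  then have "tau y \<le> tau m" by (intro tau_mono) simp
  then have "u y * E t y \<le> 0" "tau y - tau m \<le> 0" using False E_pos[of t y]
    by (auto simp: u_def mult_nonpos_nonneg)
  then show ?thesis by (simp add: mult_nonpos_nonpos)
qed

lemma T_nonneg: "T \<ge> 0"
proof -
  have lb: "(Fn \<longlongrightarrow> (0 - 0 - 2 * tau m * 0) / 2) at_bot"
    unfolding Fn_def[abs_def]
    by (intro tendsto_divide tendsto_diff A0(2) u2P_bot tendsto_mult_left Pbot tendsto_const) simp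
  have lt: "(Fn \<longlongrightarrow> (T - 0 - 2 * tau m * 0) / 2) at_top"
    unfolding Fn_def[abs_def]
    by (intro tendsto_divide tendsto_diff A0(3) u2P_top tendsto_mult_left Ptop tendsto_const) simp
  have "(0 - 0 - 2 * tau m * 0) / 2 \<le> Fn 0" by (rule mono_bot[OF Fn_deriv Fn_deriv_nonneg lb])
  moreover have "Fn 0 \<le> (T - 0 - 2 * tau m * 0) / 2" by (rule mono_top[OF Fn_deriv Fn_deriv_nonneg lt])
  ultimately show ?thesis by simp
qed

lemma key_t: "L3 t \<le> 0"
proof -
  have ne: "M 0 t \<noteq> 0" using M0pos_t by simp
  have "L3 t = - T / M 0 t"
    using ne by (simp add: L3_def T_def m_def field_simps power2_eq_square power3_eq_cube)
  then show ?thesis using T_nonneg M0pos_t by simp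
qed

end

context OY begin

lemma M0pos: "t > 0 \<Longrightarrow> M 0 t > 0"
proof -
  assume t: "t > 0"
  interpret OYt V D c C t by unfold_locales (rule t)
  show ?thesis by (rule M0pos_t)
qed

lemma key: "t > 0 \<Longrightarrow> L3 t \<le> 0"
proof -
  assume t: "t > 0"
  interpret OYt V D c C t by unfold_locales (rule t)
  show ?thesis by (rule key_t)
qed

lemma DL0: assumes t: "t > 0" shows "DERIV (\<lambda>s. ln (M 0 s)) t :> L1 t"
proof -
  have "DERIV (\<lambda>s. ln (M 0 s)) t :> (1 / M 0 t) * (- M (Suc 0) t)"
    by (rule DERIV_chain2[OF DERIV_ln_divide DM[OF t]]) (rule M0pos[OF t])
  then show ?thesis by (simp add: L1_def)
qed

lemma DL1: assumes t: "t > 0" shows "DERIV L1 t :> L2 t"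
proof -
  have m: "M 0 t \<noteq> 0" using M0pos[OF t] by simp
  have "DERIV (\<lambda>s. - M 1 s / M 0 s) t :> (- (- M (Suc 1) t) * M 0 t - (- M 1 t) * (- M (Suc 0) t)) / (M 0 t * M 0 t)"
    by (intro DERIV_divide DERIV_minus DM[OF t] m)
  moreover have "(- (- M (Suc 1) t) * M 0 t - (- M 1 t) * (- M (Suc 0) t)) / (M 0 t * M 0 t) = L2 t"
    using m by (simp add: L2_def field_simps power2_eq_square numeral_2_eq_2)
  ultimately show ?thesis unfolding L1_def[abs_def] by simp
qed

lemma DL2: assumes t: "t > 0" shows "DERIV L2 t :> L3 t"
proof -
  have m: "M 0 t \<noteq> 0" using M0pos[OF t] by simp
  have d1: "DERIV (\<lambda>s. M 1 s / M 0 s) t :> ((- M 2 t) * M 0 t - M 1 t * (- M 1 t)) / (M 0 t * M 0 t)"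
    using DERIV_divide[OF DM[OF t, of 1] DM[OF t, of 0] m] by (simp add: numeral_2_eq_2)
  have d2: "DERIV (\<lambda>s. M 2 s / M 0 s) t :> ((- M 3 t) * M 0 t - M 2 t * (- M 1 t)) / (M 0 t * M 0 t)"
    using DERIV_divide[OF DM[OF t, of 2] DM[OF t, of 0] m] by (simp add: numeral_3_eq_3 numeral_2_eq_2)
  define a where "a = ((- M 2 t) * M 0 t - M 1 t * (- M 1 t)) / (M 0 t * M 0 t)"
  define b where "b = ((- M 3 t) * M 0 t - M 2 t * (- M 1 t)) / (M 0 t * M 0 t)"
  have "DERIV (\<lambda>s. M 2 s / M 0 s - (M 1 s / M 0 s) * (M 1 s / M 0 s)) t :>
     b - (a * (M 1 t / M 0 t) + a * (M 1 t / M 0 t))"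
    unfolding a_def b_def by (intro DERIV_diff d2 DERIV_mult d1)
  moreover have "b - (a * (M 1 t / M 0 t) + a * (M 1 t / M 0 t)) = L3 t"
    using m unfolding a_def b_def by (simp add: L3_def field_simps power2_eq_square power3_eq_cube)
  moreover have "L2 = (\<lambda>s. M 2 s / M 0 s - (M 1 s / M 0 s) * (M 1 s / M 0 s))"
    by (simp add: L2_def[abs_def] power2_eq_square)
  ultimately show ?thesis by simp
qed

lemma psi_eq:
  assumes t: "t > 0"
  shows "nderiv 3 (\<lambda>s. ln (Zpart V s)) t = L3 t"
proof -
  have Z: "Zpart V s = M 0 s" for s by (simp add: Zpart_def M_def E_def)
  define F where "F = (\<lambda>s. ln (M 0 s))"
  have d1: "deriv F y = L1 y" if "y > 0" for y
    unfolding F_def by (rule DERIV_imp_deriv[OF DL0[OF that]])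
  have d2: "deriv (deriv F) y = L2 y" if "y > 0" for y
    by (rule deriv_local[of "{0<..}" y L1 "deriv F"]) (use that d1 DL1 in auto)
  have d3: "deriv (deriv (deriv F)) t = L3 t"
    by (rule deriv_local[of "{0<..}" t L2 "deriv (deriv F)"]) (use t d2 DL2 in auto)
  have "nderiv 3 (\<lambda>s. ln (Zpart V s)) t = deriv (deriv (deriv F)) t"
    by (simp add: nderiv_def Z F_def numeral_3_eq_3)
  with d3 show ?thesis by simp
qed

end

lemma nderiv_D:
  assumes "D 0 = V" "\<And>n x. DERIV (D n) x :> D (Suc n) x"
  shows "nderiv n V = D n"
proof (induction n)
  case 0
  then show ?case using assms by (simp add: nderiv_def)
next
  case (Suc n)
  have "nderiv (Suc n) V = deriv (nderiv n V)" by (simp add: nderiv_def)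
  also have "\<dots> = deriv (D n)" using Suc.IH by simp
  also have "\<dots> = D (Suc n)" by (rule ext, rule DERIV_imp_deriv, rule assms(2))
  finally show ?case .
qed

lemma convex_D2:
  fixes V :: "real \<Rightarrow> real"
  assumes cv: "convex_on UNIV V" and D1: "\<And>x. DERIV V x :> V1 x" and D2: "\<And>x. DERIV V1 x :> V2 x"
  shows "V2 x \<ge> 0"
proof -
  have mono: "V1 a \<le> V1 b" if "a < b" for a b
  proof -
    have "V b - V a \<ge> V1 a * (b - a)"
      by (rule convex_on_imp_above_tangent[OF cv]) (use D1 in \<open>auto simp: connected_UNIV\<close>)
    moreover have "V a - V b \<ge> V1 b * (a - b)"
      by (rule convex_on_imp_above_tangent[OF cv]) (use D1 in \<open>auto simp: connected_UNIV\<close>)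
    ultimately have "(b - a) * (V1 a - V1 b) \<le> 0" by (simp add: algebra_simps)
    then show ?thesis using that by (simp add: mult_le_0_iff)
  qed
  show ?thesis
  proof (rule ccontr)
    assume "\<not> V2 x \<ge> 0"
    then obtain d where "d > 0" "\<And>h. h > 0 \<Longrightarrow> h < d \<Longrightarrow> V1 x > V1 (x + h)"
      using DERIV_neg_dec_right[OF D2[of x]] by force
    then have "V1 x > V1 (x + d/2)" by simp
    moreover have "V1 x \<le> V1 (x + d/2)" using mono[of x "x + d/2"] \<open>d > 0\<close> by simp
    ultimately show False by simp
  qed
qed

theorem lemmaD1:
  fixes V :: "real \<Rightarrow> real" and \<theta> :: real
  assumes "OConnell_Yor_type V" and "\<theta> > 0"
  shows "psi2 V \<theta> \<le> 0"
proof -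
  from assms(1) obtain c C c0 D where
    Vnn: "\<And>x. V x \<ge> 0" and cv: "convex_on UNIV V" and
    D0: "D 0 = V" and DD: "\<And>n x. DERIV (D n) x :> D (Suc n) x" and
    pos: "c > 0" "C > 0" "c0 > 0" and
    Vq: "\<And>x. x \<le> - C \<Longrightarrow> V x \<ge> c * x\<^sup>2" and
    V1': "\<And>x. nderiv 1 V x \<le> 0" and
    V3': "\<And>x. c0 * nderiv 2 V x \<le> - nderiv 3 V x"
    unfolding OConnell_Yor_type_def smooth_real_def by metis
  have nd: "nderiv n V = D n" for n by (rule nderiv_D[OF D0 DD])
  have DV: "DERIV V x :> D 1 x" for x using DD[of 0 x] D0 by simp
  have V2: "D 2 x \<ge> 0" for x
    by (rule convex_D2[OF cv DV]) (use DD[of 1] in \<open>simp add: numeral_2_eq_2\<close>)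
  have V1: "D 1 x \<le> 0" for x using V1'[of x] nd by simp
  have V3: "D 3 x \<le> 0" for x
  proof -
    have "c0 * D 2 x \<ge> 0" using V2[of x] pos by simp
    then show ?thesis using V3'[of x] nd by simp
  qed
  interpret OY V D c C
    by unfold_locales (use D0 DD Vnn V1 V2 V3 Vq pos in auto)
  show ?thesis
    unfolding psi2_def using psi_eq[OF assms(2)] key[OF assms(2)] by simp
qed

end
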